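(* If an iCRS is confluent modulo hypercollapsing subterms, i.e. for all terms $s\sim_{hc}t$ and all $s\twoheadrightarrow s'$, $t\twoheadrightarrow t'$ there are $s'',t''$ with $s'\twoheadrightarrow s''$, $t'\twoheadrightarrow t''$ and $s''\sim_{hc}t''$, then it has the properties NF, UN and UN$^\rightarrow$.
   Context: Infinitary Combinatory Reduction Systems (iCRSs). Fix a signature $\Sigma$ of function symbols of finite arity, variables, and meta-variables of each finite arity. Meta-terms are the possibly infinite trees built from variables $x$, abstractions $[x]s$, $Z(s_1,\dots,s_n)$ for meta-variables $Z$ and $f(s_1,\dots,s_n)$ for $f\in\Sigma$ (metric completion of finite meta-terms modulo $\alpha$-equivalence under $d(s,t)=2^{-k}$, $k$ least depth of difference). Terms have no meta-variables. A rewrite rule $l\to r$: $l$ a finite pattern (meta-variables applied to distinct bound variables) with function symbol at the root, $r$ a meta-term with meta-variables from $l$, both closed, $r$ without infinite chains of nested meta-variable applications. A rewrite step $C[\bar\sigma(l)]\to C[\bar\sigma(r)]$ for a valuation $\bar\sigma$ (meta-variables to substitutes $\underline{\lambda}\vec x.t$, $(\underline{\lambda}\vec x.t)(\vec t)=t[\vec x:=\vec t]$) and one-hole context $C$; $\bar\sigma(l)$ is a redex, collapsing if the right-hand side of its rule has a meta-variable at the root. A transfinite reduction $(s_\beta)_{\beta<\alpha}$ is strongly convergent if $\alpha$ is a successor ordinal and at every limit $\gamma<\alpha$, $s_\beta\to s_\gamma$ and depths of contracted redexes tend to infinity; $s\twoheadrightarrow t$ denotes such a reduction. A term $s$ is hypercollapsing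 if for every $t$ with $s\twoheadrightarrow t$ there is $t'$ with $t\twoheadrightarrow t'$ having a collapsing redex at the root. $s\sim_{hc}t$ if $t$ can be obtained from $s$ by replacing some hypercollapsing subterms of $s$ by other hypercollapsing terms. A normal form is a term containing no redex. Let $\mathrel{(\twoheadleftarrow\cdot\twoheadrightarrow)^*}$ be the reflexive, symmetric, transitive closure of $\twoheadrightarrow$. NF: $s\mathrel{(\twoheadleftarrow\cdot\twoheadrightarrow)^*}t$ with $t$ a normal form implies $s\twoheadrightarrow t$. UN: $s\mathrel{(\twoheadleftarrow\cdot\twoheadrightarrow)^*}t$ with $s,t$ normal forms implies $s=t$. UN$^\rightarrow$: $t\twoheadleftarrow s\twoheadrightarrow t'$ with $t,t'$ normal forms implies $t=t'$. *)

theory Defs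
  imports Main
begin

text \<open>Bound variables are de Bruijn indices (the canonical representative of an
alpha-equivalence class); free variables are names of type 'v.  Meta-terms are
possibly infinite trees (a codatatype), i.e. the metric completion of the finite
meta-terms.  Abstraction [x]s is Ab s; Z(s1,...,sn) is MV Z [s1,...,sn].\<close>

codatatype ('f, 'v, 'm) mt =
    BV nat
  | FV 'v
  | Ab "('f, 'v, 'm) mt"
  | Fn 'f "('f, 'v, 'm) mt list"
  | MV 'm "('f, 'v, 'm) mt list"

datatype ('f, 'v, 'm) label = LBV nat | LFV 'v | LAb | LFn 'f | LMV 'm

definition root_lab :: "('f, 'v, 'm) mt \<Rightarrow> ('f, 'v, 'm) label" where
  "root_lab t = (case t of BV n \<Rightarrow> LBV n | FV x \<Rightarrow> LFV x | Ab _ \<Rightarrow> LAb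
                  | Fn f _ \<Rightarrow> LFn f | MV Z _ \<Rightarrow> LMV Z)"

type_synonym pos = "nat list"

fun subt :: "('f, 'v, 'm) mt \<Rightarrow> pos \<Rightarrow> ('f, 'v, 'm) mt option" where
  "subt t [] = Some t"
| "subt t (i # p) = (case t of
       Ab s \<Rightarrow> (if i = 0 then subt s p else None)
     | Fn f ts \<Rightarrow> (if i < length ts then subt (ts ! i) p else None)
     | MV Z ts \<Rightarrow> (if i < length ts then subt (ts ! i) p else None)
     | _ \<Rightarrow> None)"

definition lab :: "('f, 'v, 'm) mt \<Rightarrow> pos \<Rightarrow> ('f, 'v, 'm) label option" where
  "lab t p = map_option root_lab (subt t p)"

fun absd :: "('f, 'v, 'm) mt \<Rightarrow> pos \<Rightarrow> nat" where
  "absd t [] = 0"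
| "absd t (i # p) = (case t of
       Ab s \<Rightarrow> Suc (absd s p)
     | Fn f ts \<Rightarrow> absd (ts ! i) p
     | MV Z ts \<Rightarrow> absd (ts ! i) p
     | _ \<Rightarrow> 0)"

fun repl :: "('f, 'v, 'm) mt \<Rightarrow> pos \<Rightarrow> ('f, 'v, 'm) mt \<Rightarrow> ('f, 'v, 'm) mt" where
  "repl t [] u = u"
| "repl t (i # p) u = (case t of
       Ab s \<Rightarrow> (if i = 0 then Ab (repl s p u) else t)
     | Fn f ts \<Rightarrow> (if i < length ts then Fn f (ts[i := repl (ts ! i) p u]) else t)
     | MV Z ts \<Rightarrow> (if i < length ts then MV Z (ts[i := repl (ts ! i) p u]) else t)
     | _ \<Rightarrow> t)"

definition wf_mt :: "('f \<Rightarrow> nat) \<Rightarrow> ('m \<Rightarrow> nat) \<Rightarrow> ('f, 'v, 'm) mt \<Rightarrow> bool" where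
  "wf_mt ar mar t \<longleftrightarrow> (\<forall>p u. subt t p = Some u \<longrightarrow>
      (case u of Fn f ts \<Rightarrow> length ts = ar f | MV Z ts \<Rightarrow> length ts = mar Z | _ \<Rightarrow> True))"

definition no_mv :: "('f, 'v, 'm) mt \<Rightarrow> bool" where
  "no_mv t \<longleftrightarrow> (\<forall>p Z. lab t p \<noteq> Some (LMV Z))"

definition bv_closed :: "('f, 'v, 'm) mt \<Rightarrow> bool" where
  "bv_closed t \<longleftrightarrow> (\<forall>p n. lab t p = Some (LBV n) \<longrightarrow> n < absd t p)"

definition closed_mt :: "('f, 'v, 'm) mt \<Rightarrow> bool" where
  "closed_mt t \<longleftrightarrow> bv_closed t \<and> (\<forall>p x. lab t p \<noteq> Some (LFV x))"

text \<open>Possibly open terms (as occurring as subterms; may have dangling indices).\<close>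
definition is_pterm :: "('f \<Rightarrow> nat) \<Rightarrow> ('m \<Rightarrow> nat) \<Rightarrow> ('f, 'v, 'm) mt \<Rightarrow> bool" where
  "is_pterm ar mar t \<longleftrightarrow> wf_mt ar mar t \<and> no_mv t"

definition is_term :: "('f \<Rightarrow> nat) \<Rightarrow> ('m \<Rightarrow> nat) \<Rightarrow> ('f, 'v, 'm) mt \<Rightarrow> bool" where
  "is_term ar mar t \<longleftrightarrow> is_pterm ar mar t \<and> bv_closed t"

definition mvars :: "('f, 'v, 'm) mt \<Rightarrow> 'm set" where
  "mvars t = {Z. \<exists>p. lab t p = Some (LMV Z)}"

definition finite_mt :: "('f, 'v, 'm) mt \<Rightarrow> bool" where
  "finite_mt t \<longleftrightarrow> finite {p. subt t p \<noteq> None}"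

definition is_pattern :: "('f, 'v, 'm) mt \<Rightarrow> bool" where
  "is_pattern l \<longleftrightarrow> finite_mt l \<and> (\<exists>f ts. l = Fn f ts) \<and>
     (\<forall>p Z ts. subt l p = Some (MV Z ts) \<longrightarrow>
        (\<exists>ns. ts = map BV ns \<and> distinct ns))"

definition no_inf_mv_chain :: "('f, 'v, 'm) mt \<Rightarrow> bool" where
  "no_inf_mv_chain r \<longleftrightarrow> \<not> (\<exists>g :: nat \<Rightarrow> pos.
     (\<forall>i. \<exists>q. q \<noteq> [] \<and> g (Suc i) = g i @ q) \<and> (\<forall>i. \<exists>Z. lab r (g i) = Some (LMV Z)))"

definition is_rule :: "('f \<Rightarrow> nat) \<Rightarrow> ('m \<Rightarrow> nat) \<Rightarrow> ('f, 'v, 'm) mt \<times> ('f, 'v, 'm) mt \<Rightarrow> bool" where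
  "is_rule ar mar lr \<longleftrightarrow> (case lr of (l, r) \<Rightarrow>
     wf_mt ar mar l \<and> wf_mt ar mar r \<and> is_pattern l \<and> closed_mt l \<and> closed_mt r \<and>
     mvars r \<subseteq> mvars l \<and> no_inf_mv_chain r)"

definition icrs_rules :: "('f \<Rightarrow> nat) \<Rightarrow> ('m \<Rightarrow> nat) \<Rightarrow> (('f, 'v, 'm) mt \<times> ('f, 'v, 'm) mt) set \<Rightarrow> bool" where
  "icrs_rules ar mar R \<longleftrightarrow> (\<forall>lr \<in> R. is_rule ar mar lr)"

primcorec shift :: "nat \<Rightarrow> nat \<Rightarrow> ('f, 'v, 'm) mt \<Rightarrow> ('f, 'v, 'm) mt" where
  "shift c m t = (case t of
       BV k \<Rightarrow> BV (if c \<le> k then k + m else k)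
     | FV x \<Rightarrow> FV x
     | Ab s \<Rightarrow> Ab (shift (Suc c) m s)
     | Fn f ts \<Rightarrow> Fn f (map (shift c m) ts)
     | MV Z ts \<Rightarrow> MV Z (map (shift c m) ts))"

text \<open>Sub vs d e u v: v is the result of applying the substitute (lambda x1..xn. u),
n = length vs, to the arguments vs, where u is currently inspected below e of its own
binders; in u the index e+n-j (at local depth e) denotes x_j (innermost binder = x_n),
indices above refer to the context of the redex and are relocated below d binders of
the rule-side.  The arguments vs live at the same depth as the meta-variable
application and are shifted when placed under binders of u.\<close>
coinductive Sub :: "('f, 'v, 'm) mt list \<Rightarrow> nat \<Rightarrow> nat \<Rightarrow> ('f, 'v, 'm) mt \<Rightarrow> ('f, 'v, 'm) mt \<Rightarrow> bool"
  for vs :: "('f, 'v, 'm) mt list" and d :: nat where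
  Sub_bound: "k < e \<Longrightarrow> Sub vs d e (BV k) (BV k)"
| Sub_arg: "e \<le> k \<Longrightarrow> k < e + length vs \<Longrightarrow>
     Sub vs d e (BV k) (shift 0 e (vs ! (length vs - 1 - (k - e))))"
| Sub_ctx: "e + length vs \<le> k \<Longrightarrow> Sub vs d e (BV k) (BV (k - length vs + d))"
| Sub_FV: "Sub vs d e (FV x) (FV x)"
| Sub_Ab: "Sub vs d (Suc e) u v \<Longrightarrow> Sub vs d e (Ab u) (Ab v)"
| Sub_Fn: "list_all2 (Sub vs d e) us ws \<Longrightarrow> Sub vs d e (Fn f us) (Fn f ws)"

text \<open>Inst \<sigma> d r v: v is \<sigma>(r), where r occurs below d binders of the rule side.
A valuation maps each meta-variable Z to the body u of a substitute
(lambda x1..x_(mar Z). u).\<close>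
coinductive Inst :: "('m \<Rightarrow> ('f, 'v, 'm) mt) \<Rightarrow> nat \<Rightarrow> ('f, 'v, 'm) mt \<Rightarrow> ('f, 'v, 'm) mt \<Rightarrow> bool"
  for \<sigma> :: "'m \<Rightarrow> ('f, 'v, 'm) mt" where
  Inst_BV: "Inst \<sigma> d (BV k) (BV k)"
| Inst_FV: "Inst \<sigma> d (FV x) (FV x)"
| Inst_Ab: "Inst \<sigma> (Suc d) r v \<Longrightarrow> Inst \<sigma> d (Ab r) (Ab v)"
| Inst_Fn: "list_all2 (Inst \<sigma> d) rs vs \<Longrightarrow> Inst \<sigma> d (Fn f rs) (Fn f vs)"
| Inst_MV: "list_all2 (Inst \<sigma> d) rs vs \<Longrightarrow> Sub vs d 0 (\<sigma> Z) v \<Longrightarrow> Inst \<sigma> d (MV Z rs) v"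

definition valuation :: "('f \<Rightarrow> nat) \<Rightarrow> ('m \<Rightarrow> nat) \<Rightarrow> ('m \<Rightarrow> ('f, 'v, 'm) mt) \<Rightarrow> bool" where
  "valuation ar mar \<sigma> \<longleftrightarrow> (\<forall>Z. is_pterm ar mar (\<sigma> Z))"

definition step :: "('f \<Rightarrow> nat) \<Rightarrow> ('m \<Rightarrow> nat) \<Rightarrow> (('f, 'v, 'm) mt \<times> ('f, 'v, 'm) mt) set \<Rightarrow>
    pos \<Rightarrow> ('f, 'v, 'm) mt \<Rightarrow> ('f, 'v, 'm) mt \<Rightarrow> bool" where
  "step ar mar R p s t \<longleftrightarrow> (\<exists>l r \<sigma> a b. (l, r) \<in> R \<and> valuation ar mar \<sigma> \<and>
      subt s p = Some a \<and> Inst \<sigma> 0 l a \<and> Inst \<sigma> 0 r b \<and> t = repl s p b)"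

definition has_redex :: "('f \<Rightarrow> nat) \<Rightarrow> ('m \<Rightarrow> nat) \<Rightarrow> (('f, 'v, 'm) mt \<times> ('f, 'v, 'm) mt) set \<Rightarrow>
    ('f, 'v, 'm) mt \<Rightarrow> bool" where
  "has_redex ar mar R s \<longleftrightarrow> (\<exists>p l r \<sigma> a. (l, r) \<in> R \<and> valuation ar mar \<sigma> \<and>
      subt s p = Some a \<and> Inst \<sigma> 0 l a)"

definition normal_form :: "('f \<Rightarrow> nat) \<Rightarrow> ('m \<Rightarrow> nat) \<Rightarrow> (('f, 'v, 'm) mt \<times> ('f, 'v, 'm) mt) set \<Rightarrow>
    ('f, 'v, 'm) mt \<Rightarrow> bool" where
  "normal_form ar mar R t \<longleftrightarrow> is_term ar mar t \<and> \<not> has_redex ar mar R t"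

definition collapsing_root :: "('f \<Rightarrow> nat) \<Rightarrow> ('m \<Rightarrow> nat) \<Rightarrow> (('f, 'v, 'm) mt \<times> ('f, 'v, 'm) mt) set \<Rightarrow>
    ('f, 'v, 'm) mt \<Rightarrow> bool" where
  "collapsing_root ar mar R t \<longleftrightarrow> (\<exists>l r \<sigma>. (l, r) \<in> R \<and> valuation ar mar \<sigma> \<and>
      Inst \<sigma> 0 l t \<and> (\<exists>Z rs. r = MV Z rs))"

text \<open>Agreement up to depth k (distance < 2^-(k-1)).\<close>
definition agree :: "nat \<Rightarrow> ('f, 'v, 'm) mt \<Rightarrow> ('f, 'v, 'm) mt \<Rightarrow> bool" where
  "agree k s t \<longleftrightarrow> (\<forall>q. length q < k \<longrightarrow> lab s q = lab t q)"

section \<open>Transfinite reductions (ordinals represented by well-orders on nat)\<close>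

definition wlt :: "'i rel \<Rightarrow> 'i \<Rightarrow> 'i \<Rightarrow> bool" where
  "wlt W a b \<longleftrightarrow> (a, b) \<in> W \<and> a \<noteq> b"

definition is_succ :: "'i rel \<Rightarrow> 'i \<Rightarrow> 'i \<Rightarrow> bool" where
  "is_succ W a b \<longleftrightarrow> wlt W a b \<and> \<not> (\<exists>c. wlt W a c \<and> wlt W c b)"

definition is_limit :: "'i rel \<Rightarrow> 'i \<Rightarrow> bool" where
  "is_limit W g \<longleftrightarrow> g \<in> Field W \<and> (\<exists>a. wlt W a g) \<and> \<not> (\<exists>a. is_succ W a g)"

definition is_least :: "'i rel \<Rightarrow> 'i \<Rightarrow> bool" where
  "is_least W a \<longleftrightarrow> a \<in> Field W \<and> (\<forall>b \<in> Field W. (a, b) \<in> W)"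

definition is_greatest :: "'i rel \<Rightarrow> 'i \<Rightarrow> bool" where
  "is_greatest W m \<longleftrightarrow> m \<in> Field W \<and> (\<forall>b \<in> Field W. (b, m) \<in> W)"

text \<open>(W, seq, ps) is a strongly convergent reduction: W well-orders the indices
(an ordinal alpha), alpha is a successor ordinal (W has a greatest element), seq b
is the term at index b, ps b the position of the redex contracted in the step from b
to its successor; at limits the terms converge and depths tend to infinity.\<close>
definition strongly_convergent ::
  "('f \<Rightarrow> nat) \<Rightarrow> ('m \<Rightarrow> nat) \<Rightarrow> (('f, 'v, 'm) mt \<times> ('f, 'v, 'm) mt) set \<Rightarrow>
    nat rel \<Rightarrow> (nat \<Rightarrow> ('f, 'v, 'm) mt) \<Rightarrow> (nat \<Rightarrow> pos) \<Rightarrow> bool" where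
  "strongly_convergent ar mar R W seq ps \<longleftrightarrow>
     Well_order W \<and> (\<exists>m. is_greatest W m) \<and>
     (\<forall>b \<in> Field W. is_pterm ar mar (seq b)) \<and>
     (\<forall>a b. is_succ W a b \<longrightarrow> step ar mar R (ps a) (seq a) (seq b)) \<and>
     (\<forall>g. is_limit W g \<longrightarrow> (\<forall>k. \<exists>b0. wlt W b0 g \<and>
         (\<forall>b. (b0, b) \<in> W \<and> wlt W b g \<longrightarrow> agree k (seq b) (seq g) \<and> k \<le> length (ps b))))"

definition red :: "('f \<Rightarrow> nat) \<Rightarrow> ('m \<Rightarrow> nat) \<Rightarrow> (('f, 'v, 'm) mt \<times> ('f, 'v, 'm) mt) set \<Rightarrow>
    ('f, 'v, 'm) mt \<Rightarrow> ('f, 'v, 'm) mt \<Rightarrow> bool" where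
  "red ar mar R s t \<longleftrightarrow> (\<exists>W seq ps a m. strongly_convergent ar mar R W seq ps \<and>
      is_least W a \<and> is_greatest W m \<and> seq a = s \<and> seq m = t)"

definition hypercollapsing :: "('f \<Rightarrow> nat) \<Rightarrow> ('m \<Rightarrow> nat) \<Rightarrow> (('f, 'v, 'm) mt \<times> ('f, 'v, 'm) mt) set \<Rightarrow>
    ('f, 'v, 'm) mt \<Rightarrow> bool" where
  "hypercollapsing ar mar R s \<longleftrightarrow>
     (\<forall>t. red ar mar R s t \<longrightarrow> (\<exists>t'. red ar mar R t t' \<and> collapsing_root ar mar R t'))"

definition hc_equiv :: "('f \<Rightarrow> nat) \<Rightarrow> ('m \<Rightarrow> nat) \<Rightarrow> (('f, 'v, 'm) mt \<times> ('f, 'v, 'm) mt) set \<Rightarrow>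
    ('f, 'v, 'm) mt \<Rightarrow> ('f, 'v, 'm) mt \<Rightarrow> bool" where
  "hc_equiv ar mar R s t \<longleftrightarrow> (\<exists>P :: pos set.
     (\<forall>q. \<not> (\<exists>p \<in> P. \<exists>q'. q = p @ q') \<longrightarrow> lab s q = lab t q) \<and>
     (\<forall>p \<in> P. \<exists>a b. subt s p = Some a \<and> subt t p = Some b \<and>
        hypercollapsing ar mar R a \<and> hypercollapsing ar mar R b))"

definition confluent_mod_hc :: "('f \<Rightarrow> nat) \<Rightarrow> ('m \<Rightarrow> nat) \<Rightarrow> (('f, 'v, 'm) mt \<times> ('f, 'v, 'm) mt) set \<Rightarrow> bool" where
  "confluent_mod_hc ar mar R \<longleftrightarrow> (\<forall>s t s' t'.
     is_term ar mar s \<and> is_term ar mar t \<and> hc_equiv ar mar R s t \<and>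
     red ar mar R s s' \<and> red ar mar R t t' \<longrightarrow>
     (\<exists>s'' t''. red ar mar R s' s'' \<and> red ar mar R t' t'' \<and> hc_equiv ar mar R s'' t''))"

definition conv :: "('f \<Rightarrow> nat) \<Rightarrow> ('m \<Rightarrow> nat) \<Rightarrow> (('f, 'v, 'm) mt \<times> ('f, 'v, 'm) mt) set \<Rightarrow>
    ('f, 'v, 'm) mt \<Rightarrow> ('f, 'v, 'm) mt \<Rightarrow> bool" where
  "conv ar mar R = (\<lambda>s t. is_term ar mar s \<and> is_term ar mar t \<and>
      (red ar mar R s t \<or> red ar mar R t s))\<^sup>*\<^sup>*"

definition NF_prop :: "('f \<Rightarrow> nat) \<Rightarrow> ('m \<Rightarrow> nat) \<Rightarrow> (('f, 'v, 'm) mt \<times> ('f, 'v, 'm) mt) set \<Rightarrow> bool" where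
  "NF_prop ar mar R \<longleftrightarrow> (\<forall>s t. is_term ar mar s \<and> conv ar mar R s t \<and> normal_form ar mar R t
      \<longrightarrow> red ar mar R s t)"

definition UN_prop :: "('f \<Rightarrow> nat) \<Rightarrow> ('m \<Rightarrow> nat) \<Rightarrow> (('f, 'v, 'm) mt \<times> ('f, 'v, 'm) mt) set \<Rightarrow> bool" where
  "UN_prop ar mar R \<longleftrightarrow> (\<forall>s t. conv ar mar R s t \<and> normal_form ar mar R s \<and> normal_form ar mar R t
      \<longrightarrow> s = t)"

definition UN_red_prop :: "('f \<Rightarrow> nat) \<Rightarrow> ('m \<Rightarrow> nat) \<Rightarrow> (('f, 'v, 'm) mt \<times> ('f, 'v, 'm) mt) set \<Rightarrow> bool" where
  "UN_red_prop ar mar R \<longleftrightarrow> (\<forall>s t t'. is_term ar mar s \<and> red ar mar R s t \<and> red ar mar R s t' \<and>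
      normal_form ar mar R t \<and> normal_form ar mar R t' \<longrightarrow> t = t')"

end

theory Submission
  imports Defs
begin


lemma subt_append: "subt s p = Some a \<Longrightarrow> subt s (p @ q) = subt a q"
proof (induction p arbitrary: s)
  case Nil then show ?case by simp
next
  case (Cons i p)
  then show ?case by (cases s) (auto split: if_splits)
qed

lemma lab_append: "subt s p = Some a \<Longrightarrow> lab s (p @ q) = lab a q"
  by (simp add: lab_def subt_append)

lemma lab_ext:
  assumes "\<forall>q. lab s q = lab t q" shows "s = t"
  using assms
proof (coinduction arbitrary: s t rule: mt.coinduct)
  case (Eq_mt s t)
  have r: "root_lab s = root_lab t" using Eq_mt[rule_format, of "[]"] by (simp add: lab_def)
  have sub: "lab s (i # q) = lab t (i # q)" for i q using Eq_mt by blast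
  show ?case
  proof (cases s)
    case (BV n) then show ?thesis using r by (cases t) (auto simp: root_lab_def)
  next
    case (FV x) then show ?thesis using r by (cases t) (auto simp: root_lab_def)
  next
    case (Ab u)
    then obtain u' where t: "t = Ab u'" using r by (cases t) (auto simp: root_lab_def)
    have "\<forall>q. lab u q = lab u' q" using sub[of 0] Ab t by (simp add: lab_def)
    then show ?thesis using Ab t by auto
  next
    case (Fn f ts)
    then obtain us where t: "t = Fn f us" using r by (cases t) (auto simp: root_lab_def)
    have len: "length ts = length us"
    proof (rule ccontr)
      assume "length ts \<noteq> length us"
      then consider "length ts < length us" | "length us < length ts" by linarith
      then show False
      proof cases
        case 1 then show ?thesis using sub[of "length ts" "[]"] Fn t by (simp add: lab_def)
      next
        case 2 then show ?thesis using sub[of "length us" "[]"] Fn t by (simp add: lab_def)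
      qed
    qed
    have "\<forall>i<length ts. \<forall>q. lab (ts ! i) q = lab (us ! i) q"
    proof (intro allI impI)
      fix i q assume "i < length ts"
      then show "lab (ts ! i) q = lab (us ! i) q" using sub[of i q] Fn t len by (simp add: lab_def)
    qed
    then show ?thesis using Fn t len by (auto simp: list_all2_conv_all_nth)
  next
    case (MV Z ts)
    then obtain us where t: "t = MV Z us" using r by (cases t) (auto simp: root_lab_def)
    have len: "length ts = length us"
    proof (rule ccontr)
      assume "length ts \<noteq> length us"
      then consider "length ts < length us" | "length us < length ts" by linarith
      then show False
      proof cases
        case 1 then show ?thesis using sub[of "length ts" "[]"] MV t by (simp add: lab_def)
      next
        case 2 then show ?thesis using sub[of "length us" "[]"] MV t by (simp add: lab_def)
      qed
    qed
    have "\<forall>i<length ts. \<forall>q. lab (ts ! i) q = lab (us ! i) q"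
    proof (intro allI impI)
      fix i q assume "i < length ts"
      then show "lab (ts ! i) q = lab (us ! i) q" using sub[of i q] MV t len by (simp add: lab_def)
    qed
    then show ?thesis using MV t len by (auto simp: list_all2_conv_all_nth)
  qed
qed

lemma red_refl:
  assumes "is_pterm ar mar t" shows "red ar mar R t t"
proof -
  let ?W = "{(0::nat, 0::nat)}"
  have wo: "Well_order ?W"
    by (auto simp: well_order_on_def linear_order_on_def partial_order_on_def preorder_on_def
        refl_on_def trans_def antisym_def total_on_def Field_def)
  have "strongly_convergent ar mar R ?W (\<lambda>_. t) (\<lambda>_. [])"
    unfolding strongly_convergent_def using wo assms
    by (auto intro!: exI[of _ 0] simp: is_greatest_def is_succ_def is_limit_def wlt_def Field_def)
  then show ?thesis unfolding red_def
    by (intro exI[of _ ?W] exI[of _ "\<lambda>_. t"] exI[of _ "\<lambda>_. []"] exI[of _ 0])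
       (auto simp: is_least_def is_greatest_def Field_def)
qed

lemma succ_exists:
  assumes wo: "Well_order W" and am: "(a, m) \<in> W" and ne: "a \<noteq> m"
  shows "\<exists>b. is_succ W a b"
proof -
  have wf: "wf (W - Id)" using wo by (simp add: well_order_on_def)
  have "m \<in> {b. wlt W a b}" using am ne by (simp add: wlt_def)
  then obtain b where b: "b \<in> {b. wlt W a b}" and min: "\<forall>y. (y, b) \<in> W - Id \<longrightarrow> y \<notin> {b. wlt W a b}"
    using wf[unfolded wf_eq_minimal] by metis
  have "is_succ W a b" unfolding is_succ_def
  proof
    show "wlt W a b" using b by simp
    show "\<not> (\<exists>c. wlt W a c \<and> wlt W c b)" using min by (auto simp: wlt_def)
  qed
  then show ?thesis by blast
qed

lemma red_nf:
  assumes "red ar mar R s t" and "\<not> has_redex ar mar R s" shows "t = s"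
proof -
  obtain W seq ps a m where sc: "strongly_convergent ar mar R W seq ps" and
    l: "is_least W a" and g: "is_greatest W m" and sa: "seq a = s" and tm: "seq m = t"
    using assms(1) unfolding red_def by blast
  have wo: "Well_order W" using sc by (simp add: strongly_convergent_def)
  have am: "(a, m) \<in> W" using l g by (simp add: is_least_def is_greatest_def)
  show ?thesis
  proof (rule ccontr)
    assume "t \<noteq> s"
    then have "a \<noteq> m" using sa tm by auto
    then obtain b where "is_succ W a b" using succ_exists[OF wo am] by blast
    then have "step ar mar R (ps a) (seq a) (seq b)" using sc by (simp add: strongly_convergent_def)
    then have "has_redex ar mar R s" using sa unfolding step_def has_redex_def by blast
    then show False using assms(2) by blast
  qed
qed

lemma sub_no_redex:
  assumes "subt s p = Some a" "\<not> has_redex ar mar R s" shows "\<not> has_redex ar mar R a"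
proof
  assume "has_redex ar mar R a"
  then obtain q l r \<sigma> b where "(l, r) \<in> R" "valuation ar mar \<sigma>" "subt a q = Some b" "Inst \<sigma> 0 l b"
    unfolding has_redex_def by blast
  then have "has_redex ar mar R s" unfolding has_redex_def using subt_append[OF assms(1), of q]
    by (metis (no_types))
  then show False using assms(2) by blast
qed

lemma sub_pterm:
  assumes "subt s p = Some a" "is_pterm ar mar s" shows "is_pterm ar mar a"
  using assms unfolding is_pterm_def wf_mt_def no_mv_def
  by (metis subt_append lab_append)

lemma nf_not_hc:
  assumes "is_pterm ar mar a" "\<not> has_redex ar mar R a" shows "\<not> hypercollapsing ar mar R a"
proof
  assume "hypercollapsing ar mar R a"
  then obtain t' where "red ar mar R a t'" "collapsing_root ar mar R t'"
    using red_refl[OF assms(1)] unfolding hypercollapsing_def by blast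
  then have "collapsing_root ar mar R a" using red_nf assms(2) by metis
  then have "has_redex ar mar R a" unfolding collapsing_root_def has_redex_def
    by (metis subt.simps(1))
  then show False using assms(2) by blast
qed

lemma hc_nf_eq:
  assumes "hc_equiv ar mar R s t" "normal_form ar mar R s \<or> normal_form ar mar R t"
  shows "s = t"
proof -
  obtain P where P1: "\<forall>q. \<not> (\<exists>p \<in> P. \<exists>q'. q = p @ q') \<longrightarrow> lab s q = lab t q" and
    P2: "\<forall>p \<in> P. \<exists>a b. subt s p = Some a \<and> subt t p = Some b \<and>
        hypercollapsing ar mar R a \<and> hypercollapsing ar mar R b"
    using assms(1) unfolding hc_equiv_def by blast
  have "P = {}"
  proof (rule ccontr)
    assume "P \<noteq> {}"
    then obtain p where "p \<in> P" by blast
    then obtain a b where ab: "subt s p = Some a" "subt t p = Some b"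
      "hypercollapsing ar mar R a" "hypercollapsing ar mar R b" using P2 by blast
    from assms(2) show False
    proof
      assume n: "normal_form ar mar R s"
      then show False using nf_not_hc[OF sub_pterm[OF ab(1)] sub_no_redex[OF ab(1)]] ab(3)
        by (auto simp: normal_form_def is_term_def)
    next
      assume n: "normal_form ar mar R t"
      then show False using nf_not_hc[OF sub_pterm[OF ab(2)] sub_no_redex[OF ab(2)]] ab(4)
        by (auto simp: normal_form_def is_term_def)
    qed
  qed
  then show ?thesis using P1 lab_ext by auto
qed



lemma wo_facts:
  assumes "Well_order r"
  shows "refl_on (Field r) r" "trans r" "antisym r" "total_on (Field r) r" "wf (r - Id)"
  using assms by (simp_all add: well_order_on_def linear_order_on_def partial_order_on_def preorder_on_def)

lemma wo_refl: "Well_order r \<Longrightarrow> i \<in> Field r \<Longrightarrow> (i, i) \<in> r"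
  using wo_facts(1) by (metis refl_onD)
lemma wo_trans: "Well_order r \<Longrightarrow> (i, j) \<in> r \<Longrightarrow> (j, k) \<in> r \<Longrightarrow> (i, k) \<in> r"
  using wo_facts(2) by (metis transD)
lemma wo_antisym: "Well_order r \<Longrightarrow> (i, j) \<in> r \<Longrightarrow> (j, i) \<in> r \<Longrightarrow> i = j"
  using wo_facts(3) by (metis antisymD)
lemma wo_total: "Well_order r \<Longrightarrow> i \<in> Field r \<Longrightarrow> j \<in> Field r \<Longrightarrow> (i, j) \<in> r \<or> (j, i) \<in> r"
  using wo_facts(4) wo_refl by (metis total_on_def)

lemma parity_cases:
  fixes x :: nat
  obtains i where "x = 2 * i" | j where "x = Suc (2 * j)"
proof (cases "even x")
  case True then show ?thesis using that(1) by (auto elim: evenE)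
next
  case False then obtain j where "x = 2 * j + 1" by (auto elim: oddE)
  then show ?thesis using that(2) by simp
qed

locale cat =
  fixes ar :: "'f \<Rightarrow> nat" and mar :: "'m \<Rightarrow> nat"
    and R :: "(('f, 'v, 'm) mt \<times> ('f, 'v, 'm) mt) set"
    and W1 seq1 ps1 a1 m1 W2 seq2 ps2 a2 m2
  assumes sc1: "strongly_convergent ar mar R W1 seq1 ps1"
    and l1: "is_least W1 a1" and g1: "is_greatest W1 m1"
    and sc2: "strongly_convergent ar mar R W2 seq2 ps2"
    and l2: "is_least W2 a2" and g2: "is_greatest W2 m2"
    and join: "seq1 m1 = seq2 a2" and ne: "a2 \<noteq> m2"
begin

lemma wo1: "Well_order W1" using sc1 by (simp add: strongly_convergent_def)
lemma wo2: "Well_order W2" using sc2 by (simp add: strongly_convergent_def)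

definition F2 where "F2 = Field W2 - {a2}"

definition W :: "nat rel" where
  "W = {(x, y). (even x \<and> even y \<and> (x div 2, y div 2) \<in> W1) \<or>
     (even x \<and> odd y \<and> x div 2 \<in> Field W1 \<and> y div 2 \<in> F2) \<or>
     (odd x \<and> odd y \<and> (x div 2, y div 2) \<in> W2 \<and> x div 2 \<in> F2 \<and> y div 2 \<in> F2)}"

definition seq where "seq x = (if even x then seq1 (x div 2) else seq2 (x div 2))"
definition ps where "ps x = (if even x then (if x div 2 = m1 then ps2 a2 else ps1 (x div 2))
   else ps2 (x div 2))"

lemma ne_eo[simp]: "(2 * i :: nat) \<noteq> Suc (2 * j)" "Suc (2 * j) \<noteq> (2 * i :: nat)" by presburger+

lemma W_ee[simp]: "(2 * i, 2 * i') \<in> W \<longleftrightarrow> (i, i') \<in> W1"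
  by (simp add: W_def)
lemma W_eo[simp]: "(2 * i, Suc (2 * j)) \<in> W \<longleftrightarrow> i \<in> Field W1 \<and> j \<in> F2"
  by (simp add: W_def)
lemma W_oe[simp]: "(Suc (2 * j), 2 * i) \<notin> W"
  by (simp add: W_def)
lemma W_oo[simp]: "(Suc (2 * j), Suc (2 * j')) \<in> W \<longleftrightarrow> (j, j') \<in> W2 \<and> j \<in> F2 \<and> j' \<in> F2"
  by (simp add: W_def)

lemma F2_Field: "j \<in> F2 \<Longrightarrow> j \<in> Field W2" by (simp add: F2_def)

lemma Field_e[simp]: "2 * i \<in> Field W \<longleftrightarrow> i \<in> Field W1"
proof
  assume "2 * i \<in> Field W"
  then obtain y where "(2 * i, y) \<in> W \<or> (y, 2 * i) \<in> W" by (auto simp: Field_def)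
  then show "i \<in> Field W1"
    by (cases y rule: parity_cases) (auto intro: FieldI1 FieldI2)
next
  assume "i \<in> Field W1"
  then have "(2 * i, 2 * i) \<in> W" using wo_refl[OF wo1] by simp
  then show "2 * i \<in> Field W" by (rule FieldI1)
qed

lemma Field_o[simp]: "Suc (2 * j) \<in> Field W \<longleftrightarrow> j \<in> F2"
proof
  assume "Suc (2 * j) \<in> Field W"
  then obtain y where "(Suc (2 * j), y) \<in> W \<or> (y, Suc (2 * j)) \<in> W" by (auto simp: Field_def)
  then show "j \<in> F2"
    by (cases y rule: parity_cases) auto
next
  assume "j \<in> F2"
  then have "(Suc (2 * j), Suc (2 * j)) \<in> W" using wo_refl[OF wo2] F2_Field by simp
  then show "Suc (2 * j) \<in> Field W" by (rule FieldI1)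
qed

lemma wlt_ee[simp]: "wlt W (2 * i) (2 * i') \<longleftrightarrow> wlt W1 i i'"
  unfolding wlt_def W_ee by simp
lemma wlt_eo[simp]: "wlt W (2 * i) (Suc (2 * j)) \<longleftrightarrow> i \<in> Field W1 \<and> j \<in> F2"
  unfolding wlt_def W_eo by (simp only: ne_eo simp_thms)
lemma wlt_oe[simp]: "\<not> wlt W (Suc (2 * j)) (2 * i)"
  unfolding wlt_def using W_oe by blast
lemma wlt_oo[simp]: "wlt W (Suc (2 * j)) (Suc (2 * j')) \<longleftrightarrow> wlt W2 j j' \<and> j \<in> F2 \<and> j' \<in> F2"
  unfolding wlt_def W_oo by (intro iffI; elim conjE; intro conjI) simp_all


lemma W_Field: "W \<subseteq> Field W \<times> Field W"
  by (auto intro: FieldI1 FieldI2)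

lemma W_refl: "refl_on (Field W) W"
proof (rule refl_onI)
  fix x assume "x \<in> Field W"
  then show "(x, x) \<in> W"
    by (cases x rule: parity_cases) (auto intro: wo_refl[OF wo1] wo_refl[OF wo2] F2_Field)
qed

lemma W_trans: "trans W"
proof (rule transI)
  fix x y z assume xy: "(x, y) \<in> W" and yz: "(y, z) \<in> W"
  show "(x, z) \<in> W"
  proof (cases x rule: parity_cases)
    case (1 i) note x = this
    show ?thesis
    proof (cases y rule: parity_cases)
      case (1 i') note y = this
      show ?thesis
      proof (cases z rule: parity_cases)
        case (1 i'') then show ?thesis using x y xy yz wo_trans[OF wo1] by auto
      next
        case (2 j) then show ?thesis using x y xy yz by (auto intro: FieldI1)
      qed
    next
      case (2 j) note y = this
      show ?thesis
        by (cases z rule: parity_cases) (use x y xy yz in auto)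
    qed
  next
    case (2 j) note x = this
    show ?thesis
    proof (cases y rule: parity_cases)
      case (1 i') then show ?thesis using x xy by simp
    next
      case (2 j') note y = this
      show ?thesis
        by (cases z rule: parity_cases) (use x y xy yz wo_trans[OF wo2] in auto)
    qed
  qed
qed

lemma W_antisym: "antisym W"
proof (rule antisymI)
  fix x y assume xy: "(x, y) \<in> W" and yx: "(y, x) \<in> W"
  show "x = y"
    by (cases x rule: parity_cases; cases y rule: parity_cases)
       (use xy yx wo_antisym[OF wo1] wo_antisym[OF wo2] in auto)
qed

lemma W_total: "total_on (Field W) W"
proof (rule total_onI)
  fix x y assume x: "x \<in> Field W" and y: "y \<in> Field W" and "x \<noteq> y"
  show "(x, y) \<in> W \<or> (y, x) \<in> W"
    by (cases x rule: parity_cases; cases y rule: parity_cases)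
       (use x y wo_total[OF wo1] wo_total[OF wo2] F2_Field in auto)
qed

lemma W_wf: "wf (W - Id)"
  unfolding wf_eq_minimal
proof (intro allI impI)
  fix Q x assume xQ: "(x :: nat) \<in> Q"
  show "\<exists>z\<in>Q. \<forall>y. (y, z) \<in> W - Id \<longrightarrow> y \<notin> Q"
  proof (cases "\<exists>i. 2 * i \<in> Q")
    case True
    then obtain i0 where "i0 \<in> {i. 2 * i \<in> Q}" by blast
    then obtain i where iQ: "i \<in> {i. 2 * i \<in> Q}" and
      min: "\<forall>i'. (i', i) \<in> W1 - Id \<longrightarrow> i' \<notin> {i. 2 * i \<in> Q}"
      using wo_facts(5)[OF wo1, unfolded wf_eq_minimal] by metis
    show ?thesis
    proof (intro bexI[of _ "2 * i"] allI impI)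
      fix y assume "(y, 2 * i) \<in> W - Id"
      then show "y \<notin> Q" using min by (cases y rule: parity_cases) auto
    qed (use iQ in auto)
  next
    case False
    then obtain j0 where "x = Suc (2 * j0)" by (metis parity_cases xQ)
    then have "j0 \<in> {j. Suc (2 * j) \<in> Q}" using xQ by blast
    then obtain j where jQ: "j \<in> {j. Suc (2 * j) \<in> Q}" and
      min: "\<forall>j'. (j', j) \<in> W2 - Id \<longrightarrow> j' \<notin> {j. Suc (2 * j) \<in> Q}"
      using wo_facts(5)[OF wo2, unfolded wf_eq_minimal] by metis
    show ?thesis
    proof (intro bexI[of _ "Suc (2 * j)"] allI impI)
      fix y assume "(y, Suc (2 * j)) \<in> W - Id"
      then show "y \<notin> Q" using min False by (cases y rule: parity_cases) auto
    qed (use jQ in auto)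
  qed
qed

lemma W_wo: "Well_order W"
  using W_Field W_refl W_trans W_antisym W_total W_wf
  by (simp add: well_order_on_def linear_order_on_def partial_order_on_def preorder_on_def)


lemma m1_top: "wlt W1 i i' \<Longrightarrow> i \<noteq> m1"
  using g1 wo_antisym[OF wo1] unfolding is_greatest_def wlt_def by (metis FieldI2)

lemma a2_bot: "\<not> wlt W2 j a2"
  using l2 wo_antisym[OF wo2] unfolding is_least_def wlt_def by (metis FieldI1)

lemma a2_below: "j \<in> F2 \<Longrightarrow> wlt W2 a2 j"
  using l2 unfolding is_least_def wlt_def F2_def by auto

lemma wlt_F2: "wlt W2 j j' \<Longrightarrow> j' \<in> F2"
  using a2_bot unfolding F2_def wlt_def by (auto intro: FieldI2)

lemma wlt_F2': "wlt W2 j j' \<Longrightarrow> j \<noteq> a2 \<Longrightarrow> j \<in> F2"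
  unfolding F2_def wlt_def by (auto intro: FieldI1)

lemma succ_step:
  assumes "is_succ W x y" shows "step ar mar R (ps x) (seq x) (seq y)"
proof -
  have st1: "is_succ W1 i i' \<Longrightarrow> step ar mar R (ps1 i) (seq1 i) (seq1 i')" for i i'
    using sc1 by (simp add: strongly_convergent_def)
  have st2: "is_succ W2 j j' \<Longrightarrow> step ar mar R (ps2 j) (seq2 j) (seq2 j')" for j j'
    using sc2 by (simp add: strongly_convergent_def)
  from assms have lt: "wlt W x y" and nb: "\<And>c. \<not> (wlt W x c \<and> wlt W c y)"
    by (auto simp: is_succ_def)
  show ?thesis
  proof (cases x rule: parity_cases)
    case (1 i) note x = this
    show ?thesis
    proof (cases y rule: parity_cases)
      case (1 i') note y = this
      have "is_succ W1 i i'" unfolding is_succ_def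
      proof (intro conjI notI)
        show "wlt W1 i i'" using lt x y by simp
        assume "\<exists>c. wlt W1 i c \<and> wlt W1 c i'"
        then obtain c where "wlt W1 i c" "wlt W1 c i'" by blast
        then show False using nb[of "2 * c"] x y by simp
      qed
      moreover have "i \<noteq> m1" using lt x y m1_top by simp
      ultimately show ?thesis using st1 x y by (simp add: seq_def ps_def)
    next
      case (2 j) note y = this
      have iF: "i \<in> Field W1" and jF: "j \<in> F2" using lt x y by auto
      have im: "i = m1"
      proof (rule ccontr)
        assume "i \<noteq> m1"
        then have "wlt W1 i m1" using g1 iF by (simp add: is_greatest_def wlt_def)
        moreover have "m1 \<in> Field W1" using g1 by (simp add: is_greatest_def)
        ultimately show False using nb[of "2 * m1"] x y jF by simp
      qed
      have "is_succ W2 a2 j" unfolding is_succ_def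
      proof (intro conjI notI)
        show "wlt W2 a2 j" using a2_below jF .
        assume "\<exists>c. wlt W2 a2 c \<and> wlt W2 c j"
        then obtain c where "wlt W2 a2 c" "wlt W2 c j" by blast
        then show False using nb[of "Suc (2 * c)"] x y jF iF wlt_F2 by simp
      qed
      then show ?thesis using st2 x y im join by (simp add: seq_def ps_def)
    qed
  next
    case (2 j) note x = this
    show ?thesis
    proof (cases y rule: parity_cases)
      case (1 i') then show ?thesis using lt x by simp
    next
      case (2 j') note y = this
      have "is_succ W2 j j'" unfolding is_succ_def
      proof (intro conjI notI)
        show "wlt W2 j j'" using lt x y by simp
        assume "\<exists>c. wlt W2 j c \<and> wlt W2 c j'"
        then obtain c where "wlt W2 j c" "wlt W2 c j'" by blast
        then show False using nb[of "Suc (2 * c)"] x y lt wlt_F2 by simp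
      qed
      then show ?thesis using st2 x y by (simp add: seq_def ps_def)
    qed
  qed
qed


lemma limit_conv:
  assumes lim: "is_limit W g"
  shows "\<exists>b0. wlt W b0 g \<and> (\<forall>b. (b0, b) \<in> W \<and> wlt W b g \<longrightarrow>
           agree k (seq b) (seq g) \<and> k \<le> length (ps b))"
proof -
  have lim1: "is_limit W1 i \<Longrightarrow> \<exists>b0. wlt W1 b0 i \<and> (\<forall>b. (b0, b) \<in> W1 \<and> wlt W1 b i \<longrightarrow>
           agree k (seq1 b) (seq1 i) \<and> k \<le> length (ps1 b))" for i
    using sc1 unfolding strongly_convergent_def by blast
  have lim2: "is_limit W2 j \<Longrightarrow> \<exists>b0. wlt W2 b0 j \<and> (\<forall>b. (b0, b) \<in> W2 \<and> wlt W2 b j \<longrightarrow>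
           agree k (seq2 b) (seq2 j) \<and> k \<le> length (ps2 b))" for j
    using sc2 unfolding strongly_convergent_def by blast
  from lim have gF: "g \<in> Field W" and ex: "\<exists>a. wlt W a g" and nsucc: "\<And>a. \<not> is_succ W a g"
    by (auto simp: is_limit_def)
  show ?thesis
  proof (cases g rule: parity_cases)
    case (1 i) note g = this
    have "is_limit W1 i" unfolding is_limit_def
    proof (intro conjI notI)
      show "i \<in> Field W1" using gF g by simp
      obtain a where "wlt W a g" using ex by blast
      then show "\<exists>a. wlt W1 a i" using g by (cases a rule: parity_cases) auto
      assume "\<exists>a. is_succ W1 a i"
      then obtain a where a: "is_succ W1 a i" by blast
      have "is_succ W (2 * a) g" unfolding is_succ_def
      proof (intro conjI notI)
        show "wlt W (2 * a) g" using a g by (simp add: is_succ_def)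
        assume "\<exists>c. wlt W (2 * a) c \<and> wlt W c g"
        then obtain c where "wlt W (2 * a) c" "wlt W c g" by blast
        then show False using a g by (cases c rule: parity_cases) (auto simp: is_succ_def)
      qed
      then show False using nsucc by blast
    qed
    then obtain b0 where b0: "wlt W1 b0 i" and H: "\<forall>b. (b0, b) \<in> W1 \<and> wlt W1 b i \<longrightarrow>
           agree k (seq1 b) (seq1 i) \<and> k \<le> length (ps1 b)" using lim1 by blast
    show ?thesis
    proof (rule exI[of _ "2 * b0"], rule conjI)
      show "wlt W (2 * b0) g" using b0 g by simp
    next
      show "\<forall>b. (2 * b0, b) \<in> W \<and> wlt W b g \<longrightarrow> agree k (seq b) (seq g) \<and> k \<le> length (ps b)"
      proof (intro allI impI)
      fix b assume b: "(2 * b0, b) \<in> W \<and> wlt W b g"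
      then obtain b' where b': "b = 2 * b'" using g by (cases b rule: parity_cases) auto
      have "(b0, b') \<in> W1" "wlt W1 b' i" using b b' g by auto
      moreover have "b' \<noteq> m1" using m1_top calculation(2) .
      ultimately show "agree k (seq b) (seq g) \<and> k \<le> length (ps b)"
        using H b' g by (simp add: seq_def ps_def)
    qed
    qed
  next
    case (2 j) note g = this
    have jF: "j \<in> F2" using gF g by simp
    have nosuc: "\<not> is_succ W2 a j" for a
    proof
      assume a: "is_succ W2 a j"
      show False
      proof (cases "a = a2")
        case True
        have m1F: "m1 \<in> Field W1" using g1 by (simp add: is_greatest_def)
        have "is_succ W (2 * m1) g" unfolding is_succ_def
        proof (intro conjI notI)
          show "wlt W (2 * m1) g" using g jF m1F by simp
          assume "\<exists>c. wlt W (2 * m1) c \<and> wlt W c g"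
          then obtain c where c1: "wlt W (2 * m1) c" and c2: "wlt W c g" by blast
          show False
          proof (cases c rule: parity_cases)
            case (1 c') then show False using m1_top[of m1 c'] c1 1 by simp
          next
            case (2 c') then show False using c1 c2 g a True a2_below
              by (auto simp: is_succ_def)
          qed
        qed
        then show False using nsucc by blast
      next
        case False
        have aF: "a \<in> F2" using wlt_F2'[OF _ False] a unfolding is_succ_def by blast
        have "is_succ W (Suc (2 * a)) g" unfolding is_succ_def
        proof (intro conjI notI)
          show "wlt W (Suc (2 * a)) g" using g jF aF a by (simp add: is_succ_def)
          assume "\<exists>c. wlt W (Suc (2 * a)) c \<and> wlt W c g"
          then obtain c where c1: "wlt W (Suc (2 * a)) c" and c2: "wlt W c g" by blast
          show False
          proof (cases c rule: parity_cases)
            case (1 c') then show False using c1 by simp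
          next
            case (2 c') then show False using c1 c2 g a by (auto simp: is_succ_def)
          qed
        qed
        then show False using nsucc by blast
      qed
    qed
    have "is_limit W2 j" unfolding is_limit_def
      using jF F2_Field a2_below nosuc by blast
    then obtain b0 where b0: "wlt W2 b0 j" and H: "\<forall>b. (b0, b) \<in> W2 \<and> wlt W2 b j \<longrightarrow>
           agree k (seq2 b) (seq2 j) \<and> k \<le> length (ps2 b)" using lim2 by blast
    obtain c where cF: "c \<in> F2" and cj: "wlt W2 c j" and bc: "(b0, c) \<in> W2"
    proof (cases "b0 = a2")
      case True
      have "\<exists>c. wlt W2 a2 c \<and> wlt W2 c j"
        using nosuc[of a2] a2_below[OF jF] by (simp add: is_succ_def)
      then obtain c where "wlt W2 a2 c" "wlt W2 c j" by blast
      then show ?thesis using that[of c] True wlt_F2 by (simp add: wlt_def)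
    next
      case False
      then show ?thesis using that[of b0] wlt_F2'[OF b0 False] b0 wo_refl[OF wo2] F2_Field by blast
    qed
    show ?thesis
    proof (rule exI[of _ "Suc (2 * c)"], rule conjI)
      show "wlt W (Suc (2 * c)) g" using cF cj jF g by simp
    next
      show "\<forall>b. (Suc (2 * c), b) \<in> W \<and> wlt W b g \<longrightarrow> agree k (seq b) (seq g) \<and> k \<le> length (ps b)"
      proof (intro allI impI)
      fix b assume b: "(Suc (2 * c), b) \<in> W \<and> wlt W b g"
      then obtain b' where b': "b = Suc (2 * b')" by (cases b rule: parity_cases) auto
      have "(c, b') \<in> W2" "wlt W2 b' j" using b b' g by auto
      then have "(b0, b') \<in> W2" using bc wo_trans[OF wo2] by blast
      then show "agree k (seq b) (seq g) \<and> k \<le> length (ps b)"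
        using H b' g \<open>wlt W2 b' j\<close> by (simp add: seq_def ps_def)
    qed
    qed
  qed
qed


lemma W_sc: "strongly_convergent ar mar R W seq ps"
  unfolding strongly_convergent_def
proof (intro conjI allI impI ballI)
  show "Well_order W" by (rule W_wo)
  have m2F: "m2 \<in> F2" using g2 ne by (simp add: is_greatest_def F2_def)
  show "\<exists>m. is_greatest W m"
  proof (intro exI[of _ "Suc (2 * m2)"])
    show "is_greatest W (Suc (2 * m2))" unfolding is_greatest_def
    proof (intro conjI ballI)
      show "Suc (2 * m2) \<in> Field W" using m2F by simp
      fix b assume "b \<in> Field W"
      then show "(b, Suc (2 * m2)) \<in> W" using g2 m2F
        by (cases b rule: parity_cases) (auto simp: is_greatest_def F2_def)
    qed
  qed
  fix b assume "b \<in> Field W"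
  then show "is_pterm ar mar (seq b)" using sc1 sc2 F2_Field
    by (cases b rule: parity_cases) (auto simp: strongly_convergent_def seq_def)
next
  fix a b assume "is_succ W a b" then show "step ar mar R (ps a) (seq a) (seq b)" by (rule succ_step)
next
  fix g k assume "is_limit W g"
  then show "\<exists>b0. wlt W b0 g \<and> (\<forall>b. (b0, b) \<in> W \<and> wlt W b g \<longrightarrow>
           agree k (seq b) (seq g) \<and> k \<le> length (ps b))" by (rule limit_conv)
qed

lemma W_red: "red ar mar R (seq1 a1) (seq2 m2)"
  unfolding red_def
proof (intro exI conjI)
  show "strongly_convergent ar mar R W seq ps" by (rule W_sc)
  have m2F: "m2 \<in> F2" using g2 ne by (simp add: is_greatest_def F2_def)
  show "is_least W (2 * a1)" unfolding is_least_def
  proof (intro conjI ballI)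
    show "2 * a1 \<in> Field W" using l1 by (simp add: is_least_def)
    fix b assume "b \<in> Field W"
    then show "(2 * a1, b) \<in> W" using l1
      by (cases b rule: parity_cases) (auto simp: is_least_def)
  qed
  show "is_greatest W (Suc (2 * m2))" unfolding is_greatest_def
  proof (intro conjI ballI)
    show "Suc (2 * m2) \<in> Field W" using m2F by simp
    fix b assume "b \<in> Field W"
    then show "(b, Suc (2 * m2)) \<in> W" using g2 m2F
      by (cases b rule: parity_cases) (auto simp: is_greatest_def F2_def)
  qed
  show "seq (2 * a1) = seq1 a1" by (simp add: seq_def)
  show "seq (Suc (2 * m2)) = seq2 m2" by (simp add: seq_def)
qed

end

lemma red_trans:
  assumes "red ar mar R s y" "red ar mar R y t" shows "red ar mar R s t"
proof -
  obtain W1 seq1 ps1 a1 m1 where 1: "strongly_convergent ar mar R W1 seq1 ps1"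
    "is_least W1 a1" "is_greatest W1 m1" "seq1 a1 = s" "seq1 m1 = y"
    using assms(1) unfolding red_def by blast
  obtain W2 seq2 ps2 a2 m2 where 2: "strongly_convergent ar mar R W2 seq2 ps2"
    "is_least W2 a2" "is_greatest W2 m2" "seq2 a2 = y" "seq2 m2 = t"
    using assms(2) unfolding red_def by blast
  show ?thesis
  proof (cases "a2 = m2")
    case True
    then show ?thesis using assms(1) 2 by simp
  next
    case False
    interpret cat ar mar R W1 seq1 ps1 a1 m1 W2 seq2 ps2 a2 m2
      using 1 2 False by unfold_locales simp_all
    show ?thesis using W_red 1 2 by simp
  qed
qed


lemma hc_refl: "hc_equiv ar mar R s s"
  unfolding hc_equiv_def by (rule exI[of _ "{}"]) simp

lemma NF_aux:
  assumes cmh: "confluent_mod_hc ar mar R"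
  shows "conv ar mar R s t \<Longrightarrow> normal_form ar mar R t \<Longrightarrow> is_term ar mar s \<Longrightarrow> red ar mar R s t"
  unfolding conv_def
proof (induction rule: converse_rtranclp_induct)
  case base
  then show ?case by (intro red_refl) (simp add: is_term_def)
next
  case (step s y)
  then have ty: "is_term ar mar y" and IH: "red ar mar R y t" by auto
  from step(1) consider "red ar mar R s y" | "red ar mar R y s" by blast
  then show ?case
  proof cases
    case 1 then show ?thesis using IH red_trans by blast
  next
    case 2
    obtain s'' t'' where "red ar mar R s s''" "red ar mar R t t''" "hc_equiv ar mar R s'' t''"
      using cmh[unfolded confluent_mod_hc_def, rule_format, of y y s t] ty hc_refl 2 IH by blast
    moreover have "t'' = t" using red_nf \<open>red ar mar R t t''\<close> step.prems(1)
      by (auto simp: normal_form_def)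
    ultimately show ?thesis using hc_nf_eq step.prems(1) by metis
  qed
qed

theorem lemma5p4:
  fixes ar :: "'f \<Rightarrow> nat" and mar :: "'m \<Rightarrow> nat"
    and R :: "(('f, 'v, 'm) mt \<times> ('f, 'v, 'm) mt) set"
  assumes "icrs_rules ar mar R"
    and "confluent_mod_hc ar mar R"
  shows "NF_prop ar mar R \<and> UN_prop ar mar R \<and> UN_red_prop ar mar R"
proof (intro conjI)
  show nf: "NF_prop ar mar R" unfolding NF_prop_def using NF_aux[OF assms(2)] by blast
  show "UN_prop ar mar R" unfolding UN_prop_def
  proof (intro allI impI)
    fix s t assume a: "conv ar mar R s t \<and> normal_form ar mar R s \<and> normal_form ar mar R t"
    then have "red ar mar R s t" using NF_aux[OF assms(2)] by (auto simp: normal_form_def)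
    then show "s = t" using red_nf a by (metis normal_form_def)
  qed
  show "UN_red_prop ar mar R" unfolding UN_red_prop_def
  proof (intro allI impI)
    fix s t t' assume a: "is_term ar mar s \<and> red ar mar R s t \<and> red ar mar R s t' \<and>
      normal_form ar mar R t \<and> normal_form ar mar R t'"
    obtain s'' t'' where "red ar mar R t s''" "red ar mar R t' t''" "hc_equiv ar mar R s'' t''"
      using assms(2)[unfolded confluent_mod_hc_def, rule_format, of s s t t'] a hc_refl by blast
    moreover have "s'' = t" "t'' = t'" using red_nf a calculation by (auto simp: normal_form_def)
    ultimately show "t = t'" using hc_nf_eq a by metis
  qed
qed

end
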